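(* Let $q\ge5$, $q\not\equiv0\pmod3$. For the orbit $\mathcal O_L$ we have $P_T=V_2+1$ and $P_{1_\Gamma}=V_1$.
   Context: Let $\mathbb F_q$ be the field of order $q$ and $\mathrm{PG}(3,q)$ the projective space with points $\mathbf P(x_0,x_1,x_2,x_3)$. For $t\in\mathbb F_q$ put $P(t)=\mathbf P(t^3,t^2,t,1)$, and $P(\infty)=\mathbf P(1,0,0,0)$; the twisted cubic is $\mathcal C=\{P(t):t\in\mathbb F_q\cup\{\infty\}\}$ and $G_q$ is the group of projectivities fixing $\mathcal C$. The osculating plane at $P(t)$ is $x_0-3tx_1+3t^2x_2-t^3x_3=0$ ($t\in\mathbb F_q$) and $x_3=0$ at $P(\infty)$; these are the $\Gamma$-planes. The tangent at $P(t)$, $t\in\mathbb F_q$, is the line through $P(t)$ and $\mathbf P(3t^2,2t,1,0)$; at $P(\infty)$ it is the line through $\mathbf P(1,0,0,0),\mathbf P(0,1,0,0)$. $T$-points are points off $\mathcal C$ on a tangent; $1_\Gamma$-points are points off $\mathcal C$ lying in exactly one $\Gamma$-plane. $\ell_L$ is the line through $\mathbf P(1,0,0,1)$ and $\mathbf P(0,0,1,0)$, i.e. $\{\mathbf P(0,0,1,0)\}\cup\{\mathbf P(1,0,\beta,1):\beta\in\mathbb F_q\}$, and $\mathcal O_L$ is its $G_q$-orbit; for a point type $\mathfrak p$, $P_{\mathfrak p}$ is the number of $\mathfrak p$-points on a line of $\mathcal O_L$. For $m\in\{0,1,2,3\}$, $V_m$ is the number of $\beta\in\mathbb F_q$ such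 that $t^3-3\beta t^2-1=0$ has exactly $m$ distinct solutions $t\in\mathbb F_q$. *)

theory Defs
  imports "HOL-Analysis.Analysis"
begin

text \<open>Vectors of F_q^4 are 'a^4 with coordinates x0,x1,x2,x3 = x$0,x$1,x$2,x$3.
A point of PG(3,q) is the set of nonzero scalar multiples of a nonzero vector.\<close>

definition vec4 :: "'a \<Rightarrow> 'a \<Rightarrow> 'a \<Rightarrow> 'a \<Rightarrow> ('a^4)" where
  "vec4 a b c d = (\<chi> i. if i = 0 then a else if i = 1 then b else if i = 2 then c else d)"

definition pp :: "(('a::field)^4) \<Rightarrow> ('a^4) set" where
  "pp v = {c *s v | c. c \<noteq> 0}"

definition PG3 :: "(('a::field)^4) set set" where
  "PG3 = {pp v | v. v \<noteq> 0}"

definition pline :: "(('a::field)^4) \<Rightarrow> ('a^4) \<Rightarrow> ('a^4) set set" where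
  "pline u v = {pp (a *s u + b *s v) | a b. a \<noteq> 0 \<or> b \<noteq> 0}"

definition Pt :: "'a::field \<Rightarrow> ('a^4) set" where
  "Pt t = pp (vec4 (t^3) (t^2) t 1)"

definition Pinf :: "(('a::field)^4) set" where
  "Pinf = pp (vec4 1 0 0 0)"

definition twisted_cubic :: "(('a::field)^4) set set" where
  "twisted_cubic = range Pt \<union> {Pinf}"

definition pmap :: "(('a::field)^4^4) \<Rightarrow> ('a^4) set \<Rightarrow> ('a^4) set" where
  "pmap A P = (\<lambda>v. A *v v) ` P"

definition Gq :: "(('a::field)^4^4) set" where
  "Gq = {A. invertible A \<and> pmap A ` twisted_cubic = twisted_cubic}"

text \<open>Gamma-planes (osculating planes); None stands for the parameter infinity.\<close>
definition gamma_plane :: "('a::field) option \<Rightarrow> ('a^4) set set" where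
  "gamma_plane s = (case s of
      Some t \<Rightarrow> {pp x | x. x \<noteq> 0 \<and> x$0 - 3*t*x$1 + 3*t^2*x$2 - t^3*x$3 = 0}
    | None \<Rightarrow> {pp x | x. x \<noteq> 0 \<and> x$3 = 0})"

definition tangent :: "('a::field) option \<Rightarrow> ('a^4) set set" where
  "tangent s = (case s of
      Some t \<Rightarrow> pline (vec4 (t^3) (t^2) t 1) (vec4 (3*t^2) (2*t) 1 0)
    | None \<Rightarrow> pline (vec4 1 0 0 0) (vec4 0 1 0 0))"

definition T_point :: "(('a::field)^4) set \<Rightarrow> bool" where
  "T_point P \<longleftrightarrow> P \<in> PG3 \<and> P \<notin> twisted_cubic \<and> (\<exists>s. P \<in> tangent s)"

definition one_Gamma_point :: "(('a::field)^4) set \<Rightarrow> bool" where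
  "one_Gamma_point P \<longleftrightarrow> P \<in> PG3 \<and> P \<notin> twisted_cubic \<and>
     card {\<pi>. \<pi> \<in> range gamma_plane \<and> P \<in> \<pi>} = 1"

definition ell_L :: "(('a::field)^4) set set" where
  "ell_L = pline (vec4 1 0 0 1) (vec4 0 0 1 0)"

definition orbit_L :: "(('a::field)^4) set set set" where
  "orbit_L = {pmap A ` ell_L | A. A \<in> Gq}"

definition Vm :: "('a::{finite,field}) itself \<Rightarrow> nat \<Rightarrow> nat" where
  "Vm _ m = card {\<beta>::'a::{finite,field}. card {t::'a. t^3 - 3*\<beta>*t^2 - 1 = 0} = m}"

end

theory Submission
  imports Defs
begin

lemma four0[simp]: "(4::4) = 0" by simp
lemma vec4_nth[simp]: "vec4 a b c d $ 0 = a" "vec4 a b c d $ 1 = b" "vec4 a b c d $ 2 = c" "vec4 a b c d $ 3 = d"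
  by (simp_all add: vec4_def)
lemma vec4_eq_iff: "(x::'a^4) = y \<longleftrightarrow> x$0 = y$0 \<and> x$1 = y$1 \<and> x$2=y$2 \<and> x$3 = y$3"
  by (auto simp add: vec_eq_iff forall_4)
lemma mv4: "((A::'a::comm_ring_1^4^4) *v x) $ i = A$i$0 * x$0 + A$i$1*x$1 + A$i$2*x$2 + A$i$3*x$3"
  by (simp add: matrix_vector_mult_def sum_4 add_ac)
lemma vec4_expand: "(x::'a^4) = vec4 (x$0) (x$1) (x$2) (x$3)"
  by (simp add: vec4_eq_iff)
lemma vec4_zero_iff: "vec4 a b c d = 0 \<longleftrightarrow> a = 0 \<and> b = 0 \<and> c = 0 \<and> d = 0"
  by (simp add: vec4_eq_iff)
lemma smult4[simp]: "(k *s x) $ i = k * x $ i" by simp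

definition vt :: "'a::field \<Rightarrow> 'a^4" where "vt t = vec4 (t^3) (t^2) t 1"
definition e0 :: "'a::field^4" where "e0 = vec4 1 0 0 0"
definition wrep :: "'a::field option \<Rightarrow> 'a^4" where
  "wrep s = (case s of Some t \<Rightarrow> vt t | None \<Rightarrow> e0)"
definition ptof :: "'a::field option \<Rightarrow> ('a^4) set" where "ptof s = pp (wrep s)"

definition B1 :: "'a::field^4 \<Rightarrow> 'a^4 \<Rightarrow> 'a" where
  "B1 x y = x$0*y$2 + x$2*y$0 - 2*x$1*y$1"
definition B2 :: "'a::field^4 \<Rightarrow> 'a^4 \<Rightarrow> 'a" where
  "B2 x y = x$1*y$3 + x$3*y$1 - 2*x$2*y$2"
definition B3 :: "'a::field^4 \<Rightarrow> 'a^4 \<Rightarrow> 'a" where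
  "B3 x y = x$0*y$3 + x$3*y$0 - x$1*y$2 - x$2*y$1"
definition Bz :: "'a::field^4 \<Rightarrow> 'a^4 \<Rightarrow> bool" where
  "Bz x y \<longleftrightarrow> B1 x y = 0 \<and> B2 x y = 0 \<and> B3 x y = 0"
definition om :: "'a::field^4 \<Rightarrow> 'a^4 \<Rightarrow> 'a" where
  "om w x = w$3*x$0 - 3*w$2*x$1 + 3*w$1*x$2 - w$0*x$3"
definition gv :: "'a::field option \<Rightarrow> 'a^4 \<Rightarrow> 'a" where
  "gv s x = (case s of Some t \<Rightarrow> x$0 - 3*t*x$1 + 3*t^2*x$2 - t^3*x$3 | None \<Rightarrow> x$3)"

lemma in_pp: "y \<in> pp x \<longleftrightarrow> (\<exists>c. c \<noteq> 0 \<and> y = c *s x)"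
  by (auto simp: pp_def)
lemma pp_self: "x \<in> pp x"
  unfolding in_pp by (rule exI[of _ 1]) simp
lemma pp_scale: assumes "c \<noteq> 0" shows "pp (c *s x) = pp x"
proof
  show "pp (c *s x) \<subseteq> pp x"
  proof
    fix y assume "y \<in> pp (c *s x)"
    then obtain d where "d \<noteq> 0" "y = d *s (c *s x)" by (auto simp: in_pp)
    then have "y = (d * c) *s x" by simp
    then show "y \<in> pp x" using \<open>d \<noteq> 0\<close> assms unfolding in_pp by (intro exI[of _ "d*c"]) auto
  qed
  show "pp x \<subseteq> pp (c *s x)"
  proof
    fix y assume "y \<in> pp x"
    then obtain d where "d \<noteq> 0" "y = d *s x" by (auto simp: in_pp)
    then have "y = (d / c) *s (c *s x)" using assms by simp
    then show "y \<in> pp (c *s x)" using \<open>d \<noteq> 0\<close> assms unfolding in_pp by (intro exI[of _ "d/c"]) auto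
  qed
qed
lemma pp_eq_pp: "pp x = pp y \<Longrightarrow> \<exists>c. c \<noteq> 0 \<and> x = c *s y"
  using pp_self[of x] by (auto simp: in_pp)
lemma pp_nonzero: "x \<noteq> 0 \<Longrightarrow> w \<in> pp x \<Longrightarrow> w \<noteq> 0"
  by (auto simp: in_pp)
lemma pp_in_PG3: "pp x \<in> PG3 \<longleftrightarrow> x \<noteq> (0::'a::field^4)"
proof
  assume "pp x \<in> PG3"
  then obtain y where "y \<noteq> 0" "pp x = pp y" by (auto simp: PG3_def)
  then show "x \<noteq> 0" using pp_eq_pp[of x y] by auto
qed (auto simp: PG3_def)

lemma mv_smult: "(A::'a::field^4^4) *v (c *s x) = c *s (A *v x)"
  by (simp add: vec4_eq_iff mv4 algebra_simps)
lemma mv_add: "(A::'a::field^4^4) *v (x + y) = A *v x + A *v y"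
  by (simp add: vec4_eq_iff mv4 algebra_simps)
lemma pmap_pp: "pmap (A::'a::field^4^4) (pp x) = pp (A *v x)"
proof
  show "pmap A (pp x) \<subseteq> pp (A *v x)"
  proof
    fix y assume "y \<in> pmap A (pp x)"
    then obtain z where z: "z \<in> pp x" "y = A *v z" unfolding pmap_def by blast
    then obtain c where "c \<noteq> 0" "z = c *s x" by (auto simp: in_pp)
    then show "y \<in> pp (A *v x)" using z unfolding in_pp by (intro exI[of _ c]) (simp add: mv_smult)
  qed
  show "pp (A *v x) \<subseteq> pmap A (pp x)"
  proof
    fix y assume "y \<in> pp (A *v x)"
    then obtain c where c: "c \<noteq> 0" "y = c *s (A *v x)" by (auto simp: in_pp)
    then have "y = A *v (c *s x)" by (simp add: mv_smult)
    moreover have "c *s x \<in> pp x" using c unfolding in_pp by blast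
    ultimately show "y \<in> pmap A (pp x)" unfolding pmap_def by blast
  qed
qed

lemma C_eq: "twisted_cubic = range (ptof :: 'a::field option \<Rightarrow> _)"
proof -
  have "range (ptof :: 'a option \<Rightarrow> _) = ptof ` (insert None (range Some))"
    by (simp add: UNIV_option_conv)
  also have "\<dots> = range Pt \<union> {Pinf}"
    by (auto simp: ptof_def wrep_def Pt_def Pinf_def vt_def e0_def image_iff)
  finally show ?thesis by (simp add: twisted_cubic_def)
qed

lemma wrep_nz: "wrep s \<noteq> 0"
  by (cases s) (auto simp: wrep_def vt_def e0_def vec4_zero_iff)

lemma Bz_scale: "c \<noteq> 0 \<Longrightarrow> Bz (c *s w) x \<longleftrightarrow> Bz w x"
proof -
  have "B1 (c *s w) x = c * B1 w x" "B2 (c *s w) x = c * B2 w x" "B3 (c *s w) x = c * B3 w x"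
    by (simp_all add: B1_def B2_def B3_def algebra_simps)
  then show "c \<noteq> 0 \<Longrightarrow> ?thesis" by (simp add: Bz_def)
qed

lemma om_scale: "c \<noteq> 0 \<Longrightarrow> om (c *s w) x = 0 \<longleftrightarrow> om w x = 0"
proof -
  have "om (c *s w) x = c * om w x" by (simp add: om_def algebra_simps)
  then show "c \<noteq> 0 \<Longrightarrow> ?thesis" by simp
qed

lemma pline_mem:
  assumes "x \<noteq> 0"
  shows "pp x \<in> pline u v \<longleftrightarrow> (\<exists>\<alpha> \<beta>. x = \<alpha> *s u + \<beta> *s v)"
proof
  assume "pp x \<in> pline u v"
  then obtain \<alpha> \<beta> where "pp x = pp (\<alpha> *s u + \<beta> *s v)" by (auto simp: pline_def)
  then obtain c where "x = c *s (\<alpha> *s u + \<beta> *s v)" using pp_eq_pp by blast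
  then have "x = (c*\<alpha>) *s u + (c*\<beta>) *s v" by (simp add: vector_add_ldistrib)
  then show "\<exists>\<alpha> \<beta>. x = \<alpha> *s u + \<beta> *s v" by blast
next
  assume "\<exists>\<alpha> \<beta>. x = \<alpha> *s u + \<beta> *s v"
  then obtain \<alpha> \<beta> where x: "x = \<alpha> *s u + \<beta> *s v" by blast
  then have "\<alpha> \<noteq> 0 \<or> \<beta> \<noteq> 0" using assms by auto
  then show "pp x \<in> pline u v" unfolding pline_def x by blast
qed

lemma tangent_mem:
  assumes "x \<noteq> 0"
  shows "pp x \<in> tangent s \<longleftrightarrow> Bz (wrep s) x"
proof (cases s)
  case None
  have "pp x \<in> tangent s \<longleftrightarrow> (\<exists>\<alpha> \<beta>. x = \<alpha> *s vec4 1 0 0 0 + \<beta> *s vec4 0 1 0 0)"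
    using None pline_mem[OF assms] by (simp add: tangent_def)
  also have "\<dots> \<longleftrightarrow> x$2 = 0 \<and> x$3 = 0"
  proof
    assume "x $ 2 = 0 \<and> x $ 3 = 0"
    then show "\<exists>\<alpha> \<beta>. x = \<alpha> *s vec4 1 0 0 0 + \<beta> *s vec4 0 1 0 0"
      by (intro exI[of _ "x$0"] exI[of _ "x$1"]) (simp add: vec4_eq_iff)
  qed (auto)
  also have "\<dots> \<longleftrightarrow> Bz (wrep s) x"
    using None by (simp add: Bz_def B1_def B2_def B3_def wrep_def e0_def)
  finally show ?thesis .
next
  case (Some t)
  have "pp x \<in> tangent s \<longleftrightarrow> (\<exists>\<alpha> \<beta>. x = \<alpha> *s vec4 (t^3) (t^2) t 1 + \<beta> *s vec4 (3*t^2) (2*t) 1 0)"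
    using Some pline_mem[OF assms] by (simp add: tangent_def)
  also have "\<dots> \<longleftrightarrow> Bz (wrep s) x"
  proof
    assume "\<exists>\<alpha> \<beta>. x = \<alpha> *s vec4 (t^3) (t^2) t 1 + \<beta> *s vec4 (3*t^2) (2*t) 1 0"
    then obtain \<alpha> \<beta> where x: "x = \<alpha> *s vec4 (t^3) (t^2) t 1 + \<beta> *s vec4 (3*t^2) (2*t) 1 0" by blast
    have "x$0 = \<alpha>*t^3 + \<beta>*3*t^2" "x$1 = \<alpha>*t^2 + \<beta>*2*t" "x$2 = \<alpha>*t + \<beta>" "x$3 = \<alpha>"
      by (simp_all add: x)
    then show "Bz (wrep s) x" using Some
      by (simp add: Bz_def B1_def B2_def B3_def wrep_def vt_def power2_eq_square power3_eq_cube algebra_simps)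
  next
    assume "Bz (wrep s) x"
    then have e2: "t^2 * x$3 + x$1 - 2*t*x$2 = 0" and e3: "t^3*x$3 + x$0 - t^2*x$2 - t*x$1 = 0"
      using Some by (simp_all add: Bz_def B1_def B2_def B3_def wrep_def vt_def)
    have h1: "x$1 = 2*t*x$2 - t^2 * x$3" using e2 by (simp add: algebra_simps eq_neg_iff_add_eq_0)
    have h0: "x$0 = t^2*x$2 + t*x$1 - t^3*x$3" using e3 by (simp add: algebra_simps eq_neg_iff_add_eq_0)
    show "\<exists>\<alpha> \<beta>. x = \<alpha> *s vec4 (t^3) (t^2) t 1 + \<beta> *s vec4 (3*t^2) (2*t) 1 0"
    proof -
      have c0: "x$0 = x$3 * t^3 + (x$2 - t*x$3) * (3*t^2)"
        unfolding h0 h1 by (simp add: power2_eq_square power3_eq_cube algebra_simps)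
      have c1: "x$1 = x$3 * t^2 + (x$2 - t*x$3) * (2*t)"
        unfolding h1 by (simp add: power2_eq_square power3_eq_cube algebra_simps)
      have "x = x$3 *s vec4 (t^3) (t^2) t 1 + (x$2 - t*x$3) *s vec4 (3*t^2) (2*t) 1 0"
        unfolding vec4_eq_iff by (simp add: c0 c1 algebra_simps)
      then show ?thesis by blast
    qed
  qed
  finally show ?thesis .
qed

lemma gamma_mem:
  assumes "x \<noteq> 0"
  shows "pp x \<in> gamma_plane s \<longleftrightarrow> gv s x = 0"
proof (cases s)
  case None
  show ?thesis
  proof
    assume "pp x \<in> gamma_plane s"
    then obtain y where y: "y$3 = 0" "pp x = pp y" using None by (auto simp: gamma_plane_def)
    then obtain c where "x = c *s y" using pp_eq_pp by blast
    then show "gv s x = 0" using y None by (simp add: gv_def)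
  next
    assume "gv s x = 0"
    then show "pp x \<in> gamma_plane s" using None assms by (auto simp: gamma_plane_def gv_def)
  qed
next
  case (Some t)
  show ?thesis
  proof
    assume "pp x \<in> gamma_plane s"
    then obtain y where y: "y$0 - 3*t*y$1 + 3*t^2*y$2 - t^3*y$3 = 0" "pp x = pp y"
      using Some by (auto simp: gamma_plane_def)
    then obtain c where c: "x = c *s y" using pp_eq_pp by blast
    have "gv s x = c * (y$0 - 3*t*y$1 + 3*t^2*y$2 - t^3*y$3)"
      using Some by (simp add: gv_def c algebra_simps)
    then show "gv s x = 0" using y by simp
  next
    assume "gv s x = 0"
    then show "pp x \<in> gamma_plane s" using Some assms by (auto simp: gamma_plane_def gv_def)
  qed
qed

lemma gv_wrep: "gv s' (wrep s) = 0 \<longleftrightarrow> s' = s"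
proof (cases s)
  case None
  then show ?thesis by (cases s') (simp_all add: gv_def wrep_def e0_def)
next
  case (Some t)
  show ?thesis
  proof (cases s')
    case None
    then show ?thesis using Some by (simp add: gv_def wrep_def vt_def)
  next
    case (Some u)
    have "gv s' (wrep s) = (t - u)^3" using Some \<open>s = Some t\<close>
      by (simp add: gv_def wrep_def vt_def power2_eq_square power3_eq_cube algebra_simps)
    then show ?thesis using Some \<open>s = Some t\<close> by auto
  qed
qed

lemma gamma_inj: "inj (gamma_plane :: 'a::field option \<Rightarrow> _)"
proof (rule injI)
  fix s s' :: "'a option"
  assume eq: "gamma_plane s = gamma_plane s'"
  have "pp (wrep s) \<in> gamma_plane s" by (simp add: gamma_mem[OF wrep_nz] gv_wrep)
  then have "pp (wrep s) \<in> gamma_plane s'" using eq by simp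
  then have "gv s' (wrep s) = 0" by (simp add: gamma_mem[OF wrep_nz])
  then show "s = s'" by (simp add: gv_wrep)
qed

lemma ptof_inj: "inj (ptof :: 'a::field option \<Rightarrow> _)"
proof (rule injI)
  fix s s' :: "'a option"
  assume "ptof s = ptof s'"
  then obtain c where c: "wrep s = c *s wrep s'" unfolding ptof_def using pp_eq_pp by blast
  have c3: "wrep s $ 3 = c * wrep s' $ 3" and c2: "wrep s $ 2 = c * wrep s' $ 2"
    and c0: "wrep s $ 0 = c * wrep s' $ 0"
    using arg_cong[OF c, of "\<lambda>v. v$3"] arg_cong[OF c, of "\<lambda>v. v$2"] arg_cong[OF c, of "\<lambda>v. v$0"]
    by simp_all
  show "s = s'"
  proof (cases s)
    case None
    then show ?thesis using c3 c0 by (cases s') (simp_all add: wrep_def e0_def vt_def)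
  next
    case (Some t)
    then show ?thesis using c3 c2 by (cases s') (simp_all add: wrep_def e0_def vt_def)
  qed
qed

lemma gamma_card:
  assumes "x \<noteq> 0"
  shows "card {\<pi>. \<pi> \<in> range gamma_plane \<and> pp x \<in> \<pi>} = card {s. gv s x = 0}"
proof -
  have "{\<pi>. \<pi> \<in> range gamma_plane \<and> pp x \<in> \<pi>} = gamma_plane ` {s. gv s x = 0}"
    using gamma_mem[OF assms] by auto
  then show ?thesis by (metis card_image gamma_inj inj_on_subset subset_UNIV)
qed

lemma all_pp_Bz: "(\<forall>w\<in>pp y. Bz w x) \<longleftrightarrow> Bz y x"
proof
  assume "\<forall>w\<in>pp y. Bz w x" then show "Bz y x" using pp_self by blast
next
  assume h: "Bz y x"
  show "\<forall>w\<in>pp y. Bz w x"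
  proof
    fix w assume "w \<in> pp y"
    then obtain c where "c \<noteq> 0" "w = c *s y" by (auto simp: in_pp)
    then show "Bz w x" using h Bz_scale by blast
  qed
qed

lemma all_pp_om: "(\<forall>w\<in>pp y. om w x = 0) \<longleftrightarrow> om y x = 0"
proof
  assume "\<forall>w\<in>pp y. om w x = 0" then show "om y x = 0" using pp_self by blast
next
  assume h: "om y x = 0"
  show "\<forall>w\<in>pp y. om w x = 0"
  proof
    fix w assume "w \<in> pp y"
    then obtain c where "c \<noteq> 0" "w = c *s y" by (auto simp: in_pp)
    then show "om w x = 0" using h om_scale by blast
  qed
qed

definition Gset :: "'a::field^4 \<Rightarrow> ('a^4) set set" where
  "Gset x = {P \<in> twisted_cubic. \<forall>w\<in>P. om w x = 0}"

lemma om_wrep: "om (wrep s) x = 0 \<longleftrightarrow> gv s x = 0"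
  by (cases s) (auto simp: om_def gv_def wrep_def vt_def e0_def algebra_simps)

lemma Gset_card: "card (Gset x) = card {s. gv s x = 0}"
proof -
  have "Gset x = ptof ` {s. gv s x = 0}"
  proof -
    have "\<And>s. (\<forall>w\<in>ptof s. om w x = 0) \<longleftrightarrow> gv s x = 0"
    proof -
      fix s
      show "(\<forall>w\<in>ptof s. om w x = 0) \<longleftrightarrow> gv s x = 0"
        unfolding ptof_def by (simp add: all_pp_om om_wrep)
    qed
    then show ?thesis unfolding Gset_def C_eq by auto
  qed
  then show ?thesis by (metis card_image ptof_inj inj_on_subset subset_UNIV)
qed

lemma Tcond_iff:
  assumes "x \<noteq> 0"
  shows "(\<exists>s. pp x \<in> tangent s) \<longleftrightarrow> (\<exists>P\<in>twisted_cubic. \<forall>w\<in>P. Bz w x)"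
proof -
  have "\<And>s. (\<forall>w\<in>ptof s. Bz w x) \<longleftrightarrow> Bz (wrep s) x"
    unfolding ptof_def by (simp add: all_pp_Bz)
  then show ?thesis unfolding C_eq by (auto simp: tangent_mem[OF assms])
qed

lemma T_char:
  "T_point (pp x) \<longleftrightarrow> x \<noteq> 0 \<and> pp x \<notin> twisted_cubic \<and> (\<exists>P\<in>twisted_cubic. \<forall>w\<in>P. Bz w x)"
  by (cases "x = 0") (simp_all add: T_point_def pp_in_PG3 Tcond_iff)

lemma G_char:
  "one_Gamma_point (pp x) \<longleftrightarrow> x \<noteq> 0 \<and> pp x \<notin> twisted_cubic \<and> card {s. gv s x = 0} = 1"
  by (cases "x = 0") (simp_all add: one_Gamma_point_def pp_in_PG3 gamma_card)

lemma Gq_inj: "A \<in> Gq \<Longrightarrow> inj ((*v) (A::'a::field^4^4))"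
  unfolding Gq_def using inj_matrix_vector_mult by blast

lemma Gq_surj: assumes "A \<in> Gq" shows "\<exists>z. (A::'a::field^4^4) *v z = y"
proof -
  obtain A' where "A ** A' = mat 1" using assms unfolding Gq_def invertible_def by blast
  then have "A *v (A' *v y) = y" by (simp add: matrix_vector_mul_assoc)
  then show ?thesis by blast
qed

lemma Gq_C: "A \<in> Gq \<Longrightarrow> pmap A ` twisted_cubic = twisted_cubic"
  unfolding Gq_def by blast

lemma pmap_inj: "inj ((*v) (A::'a::field^4^4)) \<Longrightarrow> inj (pmap A)"
  unfolding pmap_def by (metis (mono_tags, lifting) inj_image_eq_iff injI)

lemma pmap_mem: "w \<in> pmap A P \<longleftrightarrow> (\<exists>z\<in>P. w = A *v z)"
  unfolding pmap_def by blast

lemma inv_main: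
  fixes A :: "'a::field^4^4"
  assumes A: "A \<in> Gq" and hB: "\<And>x y. Bz (A *v x) (A *v y) \<longleftrightarrow> Bz x y"
    and hO: "\<And>x y. om (A *v x) (A *v y) = 0 \<longleftrightarrow> om x y = 0"
    and P: "P \<in> PG3"
  shows "T_point (pmap A P) \<longleftrightarrow> T_point P"
    and "one_Gamma_point (pmap A P) \<longleftrightarrow> one_Gamma_point P"
proof -
  obtain x where x: "x \<noteq> 0" "P = pp x" using P by (auto simp: PG3_def)
  have inj: "inj ((*v) A)" using Gq_inj[OF A] .
  have injp: "inj (pmap A)" using pmap_inj[OF inj] .
  have AC: "pmap A ` twisted_cubic = twisted_cubic" using Gq_C[OF A] .
  have Ax: "A *v x \<noteq> 0"
  proof
    assume "A *v x = 0"
    then have "A *v x = A *v 0" by (simp only: matrix_vector_mult_0_right)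
    then have "x = 0" using inj unfolding inj_def by blast
    then show False using x(1) by simp
  qed
  have pm: "pmap A (pp x) = pp (A *v x)" by (simp add: pmap_pp)
  have Cm: "pp (A *v x) \<in> twisted_cubic \<longleftrightarrow> pp x \<in> twisted_cubic"
  proof
    assume "pp (A *v x) \<in> twisted_cubic"
    then have "pmap A (pp x) \<in> pmap A ` twisted_cubic" using AC by (simp add: pmap_pp)
    then show "pp x \<in> twisted_cubic" using injp by (auto dest: injD)
  next
    assume "pp x \<in> twisted_cubic"
    then have "pmap A (pp x) \<in> pmap A ` twisted_cubic" by blast
    then show "pp (A *v x) \<in> twisted_cubic" using AC by (simp add: pmap_pp)
  qed
  have Tc: "(\<exists>Q\<in>twisted_cubic. \<forall>w\<in>Q. Bz w (A *v x)) \<longleftrightarrow> (\<exists>Q\<in>twisted_cubic. \<forall>w\<in>Q. Bz w x)"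
  proof
    assume "\<exists>Q\<in>twisted_cubic. \<forall>w\<in>Q. Bz w (A *v x)"
    then obtain Q where Q: "Q \<in> twisted_cubic" "\<forall>w\<in>Q. Bz w (A *v x)" by blast
    then obtain Q0 where Q0: "Q0 \<in> twisted_cubic" "Q = pmap A Q0" using AC by blast
    have "\<forall>w\<in>Q0. Bz w x"
    proof
      fix w assume "w \<in> Q0"
      then have "A *v w \<in> Q" using Q0 by (auto simp: pmap_mem)
      then have "Bz (A *v w) (A *v x)" using Q by blast
      then show "Bz w x" by (simp add: hB)
    qed
    then show "\<exists>Q\<in>twisted_cubic. \<forall>w\<in>Q. Bz w x" using Q0 by blast
  next
    assume "\<exists>Q\<in>twisted_cubic. \<forall>w\<in>Q. Bz w x"
    then obtain Q0 where Q0: "Q0 \<in> twisted_cubic" "\<forall>w\<in>Q0. Bz w x" by blast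
    have "pmap A Q0 \<in> twisted_cubic" using AC Q0 by blast
    moreover have "\<forall>w\<in>pmap A Q0. Bz w (A *v x)"
      using Q0 by (auto simp: pmap_mem hB)
    ultimately show "\<exists>Q\<in>twisted_cubic. \<forall>w\<in>Q. Bz w (A *v x)" by blast
  qed
  have Gs: "Gset (A *v x) = pmap A ` Gset x"
  proof
    show "Gset (A *v x) \<subseteq> pmap A ` Gset x"
    proof
      fix Q assume "Q \<in> Gset (A *v x)"
      then have Q: "Q \<in> twisted_cubic" "\<forall>w\<in>Q. om w (A *v x) = 0" by (auto simp: Gset_def)
      then obtain Q0 where Q0: "Q0 \<in> twisted_cubic" "Q = pmap A Q0" using AC by blast
      have "\<forall>w\<in>Q0. om w x = 0"
      proof
        fix w assume "w \<in> Q0"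
        then have "A *v w \<in> Q" using Q0 by (auto simp: pmap_mem)
        then have "om (A *v w) (A *v x) = 0" using Q by blast
        then show "om w x = 0" by (simp add: hO)
      qed
      then show "Q \<in> pmap A ` Gset x" using Q0 by (auto simp: Gset_def)
    qed
    show "pmap A ` Gset x \<subseteq> Gset (A *v x)"
    proof
      fix Q assume "Q \<in> pmap A ` Gset x"
      then obtain Q0 where Q0: "Q0 \<in> twisted_cubic" "\<forall>w\<in>Q0. om w x = 0" "Q = pmap A Q0"
        by (auto simp: Gset_def)
      have "Q \<in> twisted_cubic" using AC Q0 by blast
      moreover have "\<forall>w\<in>Q. om w (A *v x) = 0" using Q0 by (auto simp: pmap_mem hO)
      ultimately show "Q \<in> Gset (A *v x)" by (simp add: Gset_def)
    qed
  qed
  have cG: "card (Gset (A *v x)) = card (Gset x)"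
    unfolding Gs by (metis card_image injp inj_on_subset subset_UNIV)
  show "T_point (pmap A P) \<longleftrightarrow> T_point P"
    unfolding x(2) pm T_char Cm Tc using x(1) Ax by simp
  show "one_Gamma_point (pmap A P) \<longleftrightarrow> one_Gamma_point P"
  proof -
    have cg: "card {s. gv s (A *v x) = 0} = card {s. gv s x = 0}" using cG by (simp add: Gset_card)
    show ?thesis unfolding x(2) pm G_char Cm cg using x(1) Ax by simp
  qed
qed

lemma ell_L_PG3: "ell_L \<subseteq> (PG3 :: ('a::field^4) set set)"
proof
  fix P :: "('a^4) set" assume "P \<in> ell_L"
  then obtain a b :: 'a where ab: "a \<noteq> 0 \<or> b \<noteq> 0" "P = pp (a *s vec4 1 0 0 1 + b *s vec4 0 0 1 0)"
    by (auto simp: ell_L_def pline_def)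
  have "a *s vec4 1 0 0 1 + b *s vec4 0 0 1 0 \<noteq> (0::'a^4)"
  proof
    assume h: "a *s vec4 1 0 0 1 + b *s vec4 0 0 1 0 = (0::'a^4)"
    have "a = 0" using arg_cong[OF h, of "\<lambda>v. v$0"] by simp
    moreover have "b = 0" using arg_cong[OF h, of "\<lambda>v. v$2"] by simp
    ultimately show False using ab(1) by simp
  qed
  then show "P \<in> PG3" using ab(2) by (simp add: pp_in_PG3)
qed

lemma orbit_counts:
  fixes A :: "'a::field^4^4"
  assumes A: "A \<in> Gq" and hB: "\<And>x y. Bz (A *v x) (A *v y) \<longleftrightarrow> Bz x y"
    and hO: "\<And>x y. om (A *v x) (A *v y) = 0 \<longleftrightarrow> om x y = 0"
  shows "card {P \<in> pmap A ` ell_L. T_point P} = card {P \<in> (ell_L :: ('a^4) set set). T_point P}"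
    and "card {P \<in> pmap A ` ell_L. one_Gamma_point P} = card {P \<in> (ell_L :: ('a^4) set set). one_Gamma_point P}"
proof -
  have injp: "inj (pmap A)" using pmap_inj[OF Gq_inj[OF A]] .
  have eqT: "{P \<in> pmap A ` ell_L. T_point P} = pmap A ` {P \<in> ell_L. T_point P}"
  proof (intro set_eqI iffI)
    fix P assume "P \<in> {P \<in> pmap A ` ell_L. T_point P}"
    then obtain P0 where P0: "P0 \<in> ell_L" "P = pmap A P0" "T_point (pmap A P0)" by blast
    have "P0 \<in> PG3" using ell_L_PG3 P0(1) by (rule subsetD)
    then have "T_point P0" using inv_main(1)[OF A hB hO] P0(3) by simp
    then show "P \<in> pmap A ` {P \<in> ell_L. T_point P}" using P0 by blast
  next
    fix P assume "P \<in> pmap A ` {P \<in> ell_L. T_point P}"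
    then obtain P0 where P0: "P0 \<in> ell_L" "P = pmap A P0" "T_point P0" by blast
    have "P0 \<in> PG3" using ell_L_PG3 P0(1) by (rule subsetD)
    then have "T_point (pmap A P0)" using inv_main(1)[OF A hB hO] P0(3) by simp
    then show "P \<in> {P \<in> pmap A ` ell_L. T_point P}" using P0 by blast
  qed
  show "card {P \<in> pmap A ` ell_L. T_point P} = card {P \<in> (ell_L :: ('a^4) set set). T_point P}"
    unfolding eqT by (rule card_image[OF inj_on_subset[OF injp subset_UNIV]])
  have eqG: "{P \<in> pmap A ` ell_L. one_Gamma_point P} = pmap A ` {P \<in> ell_L. one_Gamma_point P}"
  proof (intro set_eqI iffI)
    fix P assume "P \<in> {P \<in> pmap A ` ell_L. one_Gamma_point P}"
    then obtain P0 where P0: "P0 \<in> ell_L" "P = pmap A P0" "one_Gamma_point (pmap A P0)" by blast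
    have "P0 \<in> PG3" using ell_L_PG3 P0(1) by (rule subsetD)
    then have "one_Gamma_point P0" using inv_main(2)[OF A hB hO] P0(3) by simp
    then show "P \<in> pmap A ` {P \<in> ell_L. one_Gamma_point P}" using P0 by blast
  next
    fix P assume "P \<in> pmap A ` {P \<in> ell_L. one_Gamma_point P}"
    then obtain P0 where P0: "P0 \<in> ell_L" "P = pmap A P0" "one_Gamma_point P0" by blast
    have "P0 \<in> PG3" using ell_L_PG3 P0(1) by (rule subsetD)
    then have "one_Gamma_point (pmap A P0)" using inv_main(2)[OF A hB hO] P0(3) by simp
    then show "P \<in> {P \<in> pmap A ` ell_L. one_Gamma_point P}" using P0 by blast
  qed
  show "card {P \<in> pmap A ` ell_L. one_Gamma_point P} = card {P \<in> (ell_L :: ('a^4) set set). one_Gamma_point P}"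
    unfolding eqG by (rule card_image[OF inj_on_subset[OF injp subset_UNIV]])
qed

definition Mv :: "'a::field \<Rightarrow> 'a \<Rightarrow> 'a \<Rightarrow> 'a \<Rightarrow> 'a^4 \<Rightarrow> 'a^4" where
  "Mv a b c d x = vec4
   (a^3*x$0 + 3*a^2*b*x$1 + 3*a*b^2*x$2 + b^3*x$3)
   (a^2*c*x$0 + (a^2*d + 2*a*b*c)*x$1 + (2*a*b*d + b^2*c)*x$2 + b^2*d*x$3)
   (a*c^2*x$0 + (2*a*c*d + b*c^2)*x$1 + (a*d^2 + 2*b*c*d)*x$2 + b*d^2*x$3)
   (c^3*x$0 + 3*c^2*d*x$1 + 3*c*d^2*x$2 + d^3*x$3)"

definition Q1 :: "'a::field^4 \<Rightarrow> 'a" where "Q1 x = x$0*x$2 - x$1^2"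
definition Q2 :: "'a::field^4 \<Rightarrow> 'a" where "Q2 x = x$1*x$3 - x$2^2"
definition Q3 :: "'a::field^4 \<Rightarrow> 'a" where "Q3 x = x$0*x$3 - x$1*x$2"
definition wac :: "'a::field \<Rightarrow> 'a \<Rightarrow> 'a^4" where "wac a c = vec4 (a^3) (a^2*c) (a*c^2) (c^3)"

lemma MQ1: "Q1 (Mv a b c d x) = (a*d-b*c)^2 * (a^2 * Q1 x + b^2 * Q2 x + a*b * Q3 x)"
  unfolding Mv_def Q1_def Q2_def Q3_def vec4_nth by algebra
lemma MQ2: "Q2 (Mv a b c d x) = (a*d-b*c)^2 * (c^2 * Q1 x + d^2 * Q2 x + c*d * Q3 x)"
  unfolding Mv_def Q1_def Q2_def Q3_def vec4_nth by algebra
lemma MQ3: "Q3 (Mv a b c d x) = (a*d-b*c)^2 * (2*a*c * Q1 x + 2*b*d * Q2 x + (a*d+b*c) * Q3 x)"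
  unfolding Mv_def Q1_def Q2_def Q3_def vec4_nth by algebra
lemma MB1: "B1 (Mv a b c d x) (Mv a b c d y) = (a*d-b*c)^2 * (a^2 * B1 x y + b^2 * B2 x y + a*b * B3 x y)"
  unfolding Mv_def B1_def B2_def B3_def vec4_nth by algebra
lemma MB2: "B2 (Mv a b c d x) (Mv a b c d y) = (a*d-b*c)^2 * (c^2 * B1 x y + d^2 * B2 x y + c*d * B3 x y)"
  unfolding Mv_def B1_def B2_def B3_def vec4_nth by algebra
lemma MB3: "B3 (Mv a b c d x) (Mv a b c d y) = (a*d-b*c)^2 * (2*a*c * B1 x y + 2*b*d * B2 x y + (a*d+b*c) * B3 x y)"
  unfolding Mv_def B1_def B2_def B3_def vec4_nth by algebra
lemma Mom: "om (Mv a b c d x) (Mv a b c d y) = (a*d-b*c)^3 * om x y"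
  unfolding Mv_def om_def vec4_nth by algebra

lemma MM: "Mv d (-b) (-c) a (Mv a b c d x) = (a*d-b*c)^3 *s x"
  unfolding vec4_eq_iff smult4 Mv_def vec4_nth by (intro conjI; algebra)
lemma MMr: "Mv a b c d (Mv d (-b) (-c) a x) = (a*d-b*c)^3 *s x"
  unfolding vec4_eq_iff smult4 Mv_def vec4_nth by (intro conjI; algebra)
lemma MD: "Mv a b c d (vec4 x0 (r*x1) (r^2*x2) (r^3*x3)) = Mv a (b*r) c (d*r) (vec4 x0 x1 x2 x3)"
  unfolding vec4_eq_iff Mv_def vec4_nth by (simp add: algebra_simps power2_eq_square power3_eq_cube)
lemma Mv_add: "Mv a b c d (x + y) = Mv a b c d x + Mv a b c d y"
  unfolding vec4_eq_iff Mv_def vec4_nth vector_add_component by (intro conjI; algebra)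
lemma Mv_smult: "Mv a b c d (k *s x) = k *s Mv a b c d x"
  unfolding vec4_eq_iff Mv_def vec4_nth smult4 by (intro conjI; algebra)
lemma Mv_e0: "Mv a b c d (vec4 1 0 0 0) = wac a c"
  by (simp add: Mv_def wac_def)
lemma Mv_e3: "Mv a b c d (vec4 0 0 0 1) = wac b d"
  by (simp add: Mv_def wac_def)
lemma Q_wac: "Q1 (wac a c) = 0" "Q2 (wac a c) = 0" "Q3 (wac a c) = 0"
  unfolding Q1_def Q2_def Q3_def wac_def vec4_nth by algebra+
lemma Q_smult: "Q1 (k *s x) = k^2 * Q1 x" "Q2 (k *s x) = k^2 * Q2 x" "Q3 (k *s x) = k^2 * Q3 x"
  unfolding Q1_def Q2_def Q3_def smult4 by algebra+
lemma B_smult: "B1 (k *s x) (k *s y) = k^2 * B1 x y" "B2 (k *s x) (k *s y) = k^2 * B2 x y"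
  "B3 (k *s x) (k *s y) = k^2 * B3 x y"
  unfolding B1_def B2_def B3_def smult4 by algebra+
lemma om_smult: "om (k *s x) (k *s y) = k^2 * om x y"
  unfolding om_def smult4 by algebra

lemma N_inj:
  fixes a b c d u1 u2 u3 :: "'a::field"
  assumes "a^2*u1 + b^2*u2 + a*b*u3 = 0" "c^2*u1 + d^2*u2 + c*d*u3 = 0"
    "2*a*c*u1 + 2*b*d*u2 + (a*d+b*c)*u3 = 0" "a*d - b*c \<noteq> 0"
  shows "u1 = 0 \<and> u2 = 0 \<and> u3 = 0"
proof -
  have "(a*d-b*c)^2 * u1 = d^2*(a^2*u1 + b^2*u2 + a*b*u3) + b^2*(c^2*u1 + d^2*u2 + c*d*u3)
      - b*d*(2*a*c*u1 + 2*b*d*u2 + (a*d+b*c)*u3)" by algebra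
  then have u1: "u1 = 0" using assms by simp
  have "(a*d-b*c)^2 * u2 = c^2*(a^2*u1 + b^2*u2 + a*b*u3) + a^2*(c^2*u1 + d^2*u2 + c*d*u3)
      - a*c*(2*a*c*u1 + 2*b*d*u2 + (a*d+b*c)*u3)" by algebra
  then have u2: "u2 = 0" using assms by simp
  have "(a*d-b*c)^2 * u3 = -2*c*d*(a^2*u1 + b^2*u2 + a*b*u3) - 2*a*b*(c^2*u1 + d^2*u2 + c*d*u3)
      + (a*d+b*c)*(2*a*c*u1 + 2*b*d*u2 + (a*d+b*c)*u3)" by algebra
  then have u3: "u3 = 0" using assms by simp
  show ?thesis using u1 u2 u3 by simp
qed

lemma Bz_Mv:
  assumes "a*d - b*c \<noteq> 0" "\<mu> \<noteq> 0"
  shows "Bz (\<mu> *s Mv a b c d x) (\<mu> *s Mv a b c d y) \<longleftrightarrow> Bz x y"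
proof -
  let ?D = "a*d-b*c"
  have e: "B1 (\<mu> *s Mv a b c d x) (\<mu> *s Mv a b c d y) = \<mu>^2 * ?D^2 * (a^2 * B1 x y + b^2 * B2 x y + a*b * B3 x y)"
    "B2 (\<mu> *s Mv a b c d x) (\<mu> *s Mv a b c d y) = \<mu>^2 * ?D^2 * (c^2 * B1 x y + d^2 * B2 x y + c*d * B3 x y)"
    "B3 (\<mu> *s Mv a b c d x) (\<mu> *s Mv a b c d y) = \<mu>^2 * ?D^2 * (2*a*c * B1 x y + 2*b*d * B2 x y + (a*d+b*c) * B3 x y)"
    by (simp_all only: B_smult MB1 MB2 MB3 mult.assoc)
  show ?thesis
  proof
    assume "Bz (\<mu> *s Mv a b c d x) (\<mu> *s Mv a b c d y)"
    then have "a^2 * B1 x y + b^2 * B2 x y + a*b * B3 x y = 0"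
      "c^2 * B1 x y + d^2 * B2 x y + c*d * B3 x y = 0"
      "2*a*c * B1 x y + 2*b*d * B2 x y + (a*d+b*c) * B3 x y = 0"
      using assms unfolding Bz_def e by simp_all
    then have "B1 x y = 0 \<and> B2 x y = 0 \<and> B3 x y = 0" by (rule N_inj[OF _ _ _ assms(1)])
    then show "Bz x y" unfolding Bz_def .
  next
    assume "Bz x y"
    then show "Bz (\<mu> *s Mv a b c d x) (\<mu> *s Mv a b c d y)" unfolding Bz_def e by simp
  qed
qed

lemma om_Mv:
  assumes "a*d - b*c \<noteq> 0" "\<mu> \<noteq> 0"
  shows "om (\<mu> *s Mv a b c d x) (\<mu> *s Mv a b c d y) = 0 \<longleftrightarrow> om x y = 0"
  using assms by (simp add: om_smult Mom)

lemma C_rep: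
  assumes "P \<in> twisted_cubic" "y \<in> P"
  shows "\<exists>l a c. l \<noteq> 0 \<and> (a \<noteq> 0 \<or> c \<noteq> 0) \<and> y = l *s wac a c"
proof -
  obtain s where s: "P = ptof s" using assms(1) unfolding C_eq by blast
  have "y \<in> pp (wrep s)" using assms(2) s by (simp add: ptof_def)
  then obtain l where l: "l \<noteq> 0" "y = l *s wrep s" by (auto simp: in_pp)
  show ?thesis
  proof (cases s)
    case None
    then have "wrep s = wac 1 0" by (simp add: wrep_def e0_def wac_def)
    then show ?thesis using l by (intro exI[of _ l] exI[of _ 1] exI[of _ 0]) simp
  next
    case (Some t)
    then have "wrep s = wac t 1" by (simp add: wrep_def vt_def wac_def)
    then show ?thesis using l by (intro exI[of _ l] exI[of _ t] exI[of _ 1]) simp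
  qed
qed

lemma img_vec:
  assumes A: "A \<in> Gq" and x: "pp x \<in> twisted_cubic"
  shows "\<exists>l a c. l \<noteq> 0 \<and> (a \<noteq> 0 \<or> c \<noteq> 0) \<and> A *v x = l *s wac a c"
proof -
  have "pmap A (pp x) \<in> twisted_cubic" using Gq_C[OF A] x by blast
  then have "pp (A *v x) \<in> twisted_cubic" by (simp add: pmap_pp)
  then show ?thesis using C_rep pp_self by blast
qed

lemma cubic4:
  fixes c0 c1 c2 c3 t1 t2 t3 t4 :: "'a::field"
  assumes d: "t1 \<noteq> t2" "t1 \<noteq> t3" "t1 \<noteq> t4" "t2 \<noteq> t3" "t2 \<noteq> t4" "t3 \<noteq> t4"
    and f1: "c3*t1^3 + c2*t1^2 + c1*t1 + c0 = 0" and f2: "c3*t2^3 + c2*t2^2 + c1*t2 + c0 = 0"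
    and f3: "c3*t3^3 + c2*t3^2 + c1*t3 + c0 = 0" and f4: "c3*t4^3 + c2*t4^2 + c1*t4 + c0 = 0"
  shows "c0 = 0 \<and> c1 = 0 \<and> c2 = 0 \<and> c3 = 0"
proof -
  have "\<And>u w. (u - w) * (c3*(u^2+u*w+w^2) + c2*(u+w) + c1)
     = (c3*u^3 + c2*u^2 + c1*u + c0) - (c3*w^3 + c2*w^2 + c1*w + c0)" by algebra
  then have g: "\<And>u w. u \<noteq> w \<Longrightarrow> c3*u^3 + c2*u^2 + c1*u + c0 = 0 \<Longrightarrow> c3*w^3 + c2*w^2 + c1*w + c0 = 0
     \<Longrightarrow> c3*(u^2+u*w+w^2) + c2*(u+w) + c1 = 0"
    by (metis (no_types, lifting) diff_self eq_iff_diff_eq_0 mult_eq_0_iff)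
  have g12: "c3*(t1^2+t1*t2+t2^2) + c2*(t1+t2) + c1 = 0" using g[OF d(1) f1 f2] .
  have g13: "c3*(t1^2+t1*t3+t3^2) + c2*(t1+t3) + c1 = 0" using g[OF d(2) f1 f3] .
  have g14: "c3*(t1^2+t1*t4+t4^2) + c2*(t1+t4) + c1 = 0" using g[OF d(3) f1 f4] .
  have "\<And>u w. (u - w) * (c3*(t1+u+w) + c2)
     = (c3*(t1^2+t1*u+u^2) + c2*(t1+u) + c1) - (c3*(t1^2+t1*w+w^2) + c2*(t1+w) + c1)" by algebra
  then have h: "\<And>u w. u \<noteq> w \<Longrightarrow> c3*(t1^2+t1*u+u^2) + c2*(t1+u) + c1 = 0 \<Longrightarrow>
      c3*(t1^2+t1*w+w^2) + c2*(t1+w) + c1 = 0 \<Longrightarrow> c3*(t1+u+w) + c2 = 0"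
    by (metis (no_types, lifting) diff_self eq_iff_diff_eq_0 mult_eq_0_iff)
  have h23: "c3*(t1+t2+t3) + c2 = 0" using h[OF d(4) g12 g13] .
  have h24: "c3*(t1+t2+t4) + c2 = 0" using h[OF d(5) g12 g14] .
  have "(t3 - t4) * c3 = (c3*(t1+t2+t3) + c2) - (c3*(t1+t2+t4) + c2)" by algebra
  then have e3: "c3 = 0" using h23 h24 d(6) by simp
  then have e2: "c2 = 0" using h23 by simp
  then have e1: "c1 = 0" using g12 e3 by simp
  then have "c0 = 0" using f1 e2 e3 by simp
  then show ?thesis using e1 e2 e3 by simp
qed

lemma four_nonzero:
  assumes q: "CARD('a::{finite,field}) \<ge> 5"
  shows "\<exists>t1 t2 t3 t4::'a. t1 \<noteq> 0 \<and> t2 \<noteq> 0 \<and> t3 \<noteq> 0 \<and> t4 \<noteq> 0 \<and>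
     t1 \<noteq> t2 \<and> t1 \<noteq> t3 \<and> t1 \<noteq> t4 \<and> t2 \<noteq> t3 \<and> t2 \<noteq> t4 \<and> t3 \<noteq> t4"
proof -
  define S where "S = {t::'a. t \<noteq> 0}"
  have "S = UNIV - {0}" unfolding S_def by auto
  then have cS: "card S = CARD('a) - 1" by (simp add: card_Diff_subset)
  have ns: "\<not> S \<subseteq> F" if "card F \<le> 3" for F :: "'a set"
  proof
    assume "S \<subseteq> F"
    then have "card S \<le> card F" by (intro card_mono) auto
    then show False using that cS q by simp
  qed
  obtain t1 where t1: "t1 \<in> S" using ns[of "{}"] by auto
  obtain t2 where t2: "t2 \<in> S" "t2 \<noteq> t1" using ns[of "{t1}"] by auto
  have "card {t1, t2} \<le> 3" using card_length[of "[t1,t2]"] by simp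
  then obtain t3 where t3: "t3 \<in> S" "t3 \<noteq> t1" "t3 \<noteq> t2" using ns[of "{t1,t2}"] by auto
  have "card {t1, t2, t3} \<le> 3" using card_length[of "[t1,t2,t3]"] by simp
  then obtain t4 where t4: "t4 \<in> S" "t4 \<noteq> t1" "t4 \<noteq> t2" "t4 \<noteq> t3" using ns[of "{t1,t2,t3}"] by auto
  show ?thesis using t1 t2 t3 t4 unfolding S_def by (intro exI[of _ t1] exI[of _ t2] exI[of _ t3] exI[of _ t4]) auto
qed

lemma cubic_zero:
  fixes c0 c1 c2 c3 :: "'a::{finite,field}"
  assumes q: "CARD('a) \<ge> 5" and h: "\<And>t. t \<noteq> 0 \<Longrightarrow> c3*t^3 + c2*t^2 + c1*t + c0 = 0"
  shows "c0 = 0 \<and> c1 = 0 \<and> c2 = 0 \<and> c3 = 0"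
proof -
  obtain t1 t2 t3 t4 :: 'a where t: "t1 \<noteq> 0" "t2 \<noteq> 0" "t3 \<noteq> 0" "t4 \<noteq> 0"
     "t1 \<noteq> t2" "t1 \<noteq> t3" "t1 \<noteq> t4" "t2 \<noteq> t3" "t2 \<noteq> t4" "t3 \<noteq> t4"
    using four_nonzero[OF q] by blast
  show ?thesis by (rule cubic4[OF t(5-10) h[OF t(1)] h[OF t(2)] h[OF t(3)] h[OF t(4)]])
qed

lemma wac_dep:
  fixes a b c d :: "'a::field"
  assumes D0: "a*d - b*c = 0" and ac: "a \<noteq> 0 \<or> c \<noteq> 0"
  shows "\<exists>k. wac b d = k *s wac a c"
proof (cases "a = 0")
  case False
  then have dd: "d = b*c/a" using D0 by (simp add: field_simps)
  show ?thesis
    by (rule exI[of _ "(b/a)^3"]) (simp add: vec4_eq_iff wac_def dd False power2_eq_square power3_eq_cube field_simps)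
next
  case True
  then have c: "c \<noteq> 0" using ac by simp
  then have b: "b = 0" using D0 True by simp
  show ?thesis
    by (rule exI[of _ "(d/c)^3"]) (simp add: vec4_eq_iff wac_def b True c power3_eq_cube field_simps)
qed

lemma classify:
  fixes A :: "'a::{finite,field}^4^4"
  assumes A: "A \<in> Gq" and q: "CARD('a) \<ge> 5"
  shows "\<exists>a b c d \<mu>. a*d - b*c \<noteq> 0 \<and> \<mu> \<noteq> 0 \<and> (\<forall>x. A *v x = \<mu> *s Mv a b c d x)"
proof -
  define ev0 :: "'a^4" where "ev0 = vec4 1 0 0 0"
  define ev1 :: "'a^4" where "ev1 = vec4 0 1 0 0"
  define ev2 :: "'a^4" where "ev2 = vec4 0 0 1 0"
  define ev3 :: "'a^4" where "ev3 = vec4 0 0 0 1"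
  have C0: "pp ev0 \<in> twisted_cubic" by (simp add: twisted_cubic_def Pinf_def ev0_def)
  have "Pt 0 = pp ev3" by (simp add: Pt_def ev3_def)
  then have C3: "pp ev3 \<in> twisted_cubic" by (metis UnI1 rangeI twisted_cubic_def)
  have Ct: "pp (vt t) \<in> twisted_cubic" for t
  proof -
    have "Pt t = pp (vt t)" by (simp add: Pt_def vt_def)
    then show ?thesis by (metis UnI1 rangeI twisted_cubic_def)
  qed
  obtain l0 a c where L0: "l0 \<noteq> 0" "a \<noteq> 0 \<or> c \<noteq> 0" "A *v ev0 = l0 *s wac a c"
    using img_vec[OF A C0] by blast
  obtain l3 b d where L3: "l3 \<noteq> 0" "b \<noteq> 0 \<or> d \<noteq> 0" "A *v ev3 = l3 *s wac b d"
    using img_vec[OF A C3] by blast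
  have inj: "inj ((*v) A)" using Gq_inj[OF A] .
  have D: "a*d - b*c \<noteq> 0"
  proof
    assume D0: "a*d - b*c = 0"
    obtain k where k: "wac b d = k *s wac a c" using wac_dep[OF D0 L0(2)] by blast
    have "A *v ((l3*k/l0) *s ev0) = (l3*k/l0) *s (l0 *s wac a c)" by (simp add: mv_smult L0(3))
    also have "\<dots> = l3 *s wac b d" using L0(1) by (simp add: k)
    finally have "A *v ((l3*k/l0) *s ev0) = A *v ev3" using L3(3) by simp
    then have "(l3*k/l0) *s ev0 = ev3" using inj unfolding inj_def by blast
    then have "((l3*k/l0) *s ev0) $ 3 = ev3 $ 3" by (rule arg_cong)
    then show False by (simp add: ev0_def ev3_def)
  qed
  define D where "D = a*d - b*c"
  have Dnz: "D \<noteq> 0" using D by (simp add: D_def)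
  define h where "h x = Mv d (-b) (-c) a (A *v x)" for x
  have MMa: "Mv d (-b) (-c) a (Mv a b c d x) = D^3 *s x" for x by (simp add: MM D_def)
  have h_add: "h (x + y) = h x + h y" for x y by (simp add: h_def mv_add Mv_add)
  have h_smult: "h (k *s x) = k *s h x" for k x by (simp add: h_def mv_smult Mv_smult)
  have h_lin: "h x = x$0 *s h ev0 + x$1 *s h ev1 + x$2 *s h ev2 + x$3 *s h ev3" for x
  proof -
    have xeq: "x = x$0 *s ev0 + x$1 *s ev1 + x$2 *s ev2 + x$3 *s ev3"
      by (simp add: vec4_eq_iff ev0_def ev1_def ev2_def ev3_def)
    have "h x = h (x$0 *s ev0 + x$1 *s ev1 + x$2 *s ev2 + x$3 *s ev3)" using xeq by (rule arg_cong)
    also have "\<dots> = x$0 *s h ev0 + x$1 *s h ev1 + x$2 *s h ev2 + x$3 *s h ev3"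
      by (simp only: h_add h_smult)
    finally show ?thesis .
  qed
  define k0 where "k0 = l0 * D^3"
  define k3 where "k3 = l3 * D^3"
  have k0nz: "k0 \<noteq> 0" using L0(1) Dnz by (simp add: k0_def)
  have k3nz: "k3 \<noteq> 0" using L3(1) Dnz by (simp add: k3_def)
  have g0: "h ev0 = k0 *s ev0"
  proof -
    have w0: "wac a c = Mv a b c d ev0" by (simp add: Mv_e0 ev0_def)
    have "h ev0 = l0 *s Mv d (-b) (-c) a (wac a c)" by (simp add: h_def L0(3) Mv_smult)
    then show ?thesis by (simp add: w0 MMa k0_def)
  qed
  have g3: "h ev3 = k3 *s ev3"
  proof -
    have w3: "wac b d = Mv a b c d ev3" by (simp add: Mv_e3 ev3_def)
    have "h ev3 = l3 *s Mv d (-b) (-c) a (wac b d)" by (simp add: h_def L3(3) Mv_smult)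
    then show ?thesis by (simp add: w3 MMa k3_def)
  qed
  define p0 where "p0 = h ev1 $ 0"
  define p1 where "p1 = h ev1 $ 1"
  define p2 where "p2 = h ev1 $ 2"
  define p3 where "p3 = h ev1 $ 3"
  define q0 where "q0 = h ev2 $ 0"
  define q1 where "q1 = h ev2 $ 1"
  define q2 where "q2 = h ev2 $ 2"
  define q3 where "q3 = h ev2 $ 3"
  have hc: "h x $ 0 = k0 * x$0 + p0 * x$1 + q0 * x$2"
     "h x $ 1 = p1 * x$1 + q1 * x$2"
     "h x $ 2 = p2 * x$1 + q2 * x$2"
     "h x $ 3 = p3 * x$1 + q3 * x$2 + k3 * x$3" for x
  proof -
    have hi: "h x $ i = x$0 * h ev0 $ i + x$1 * h ev1 $ i + x$2 * h ev2 $ i + x$3 * h ev3 $ i" for i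
      by (subst h_lin) simp
    show "h x $ 0 = k0 * x$0 + p0 * x$1 + q0 * x$2"
     "h x $ 1 = p1 * x$1 + q1 * x$2"
     "h x $ 2 = p2 * x$1 + q2 * x$2"
     "h x $ 3 = p3 * x$1 + q3 * x$2 + k3 * x$3"
      unfolding hi g0 g3 p0_def p1_def p2_def p3_def q0_def q1_def q2_def q3_def
      by (simp_all add: ev0_def ev3_def algebra_simps)
  qed
  have QF: "Q1 (h (vt t)) = 0 \<and> Q2 (h (vt t)) = 0" for t
  proof -
    obtain l p r where "A *v vt t = l *s wac p r" using img_vec[OF A Ct] by blast
    then have z: "Q1 (A *v vt t) = 0" "Q2 (A *v vt t) = 0" "Q3 (A *v vt t) = 0"
      by (simp_all add: Q_smult Q_wac)
    show ?thesis unfolding h_def MQ1 MQ2 using z by simp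
  qed
  have cub2: "(p1*p3 - p2^2)*t^3 + (p1*q3 + q1*p3 - 2*p2*q2)*t^2 + (p1*k3 + q1*q3 - q2^2)*t + q1*k3 = 0"
    if "t \<noteq> 0" for t
  proof -
    have "Q2 (h (vt t)) = (p1*t^2 + q1*t)*(p3*t^2 + q3*t + k3) - (p2*t^2 + q2*t)^2"
      by (simp add: Q2_def hc vt_def)
    also have "\<dots> = t * ((p1*p3 - p2^2)*t^3 + (p1*q3 + q1*p3 - 2*p2*q2)*t^2 + (p1*k3 + q1*q3 - q2^2)*t + q1*k3)"
      by algebra
    finally show ?thesis using QF[of t] that by simp
  qed
  have cub1: "(k0*p2)*t^3 + (k0*q2 + p0*p2 - p1^2)*t^2 + (p0*q2 + q0*p2 - 2*p1*q1)*t + (q0*q2 - q1^2) = 0"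
    if "t \<noteq> 0" for t
  proof -
    have "Q1 (h (vt t)) = (k0*t^3 + p0*t^2 + q0*t)*(p2*t^2 + q2*t) - (p1*t^2 + q1*t)^2"
      by (simp add: Q1_def hc vt_def)
    also have "\<dots> = t^2 * ((k0*p2)*t^3 + (k0*q2 + p0*p2 - p1^2)*t^2 + (p0*q2 + q0*p2 - 2*p1*q1)*t + (q0*q2 - q1^2))"
      by algebra
    finally show ?thesis using QF[of t] that by simp
  qed
  have c2: "q1*k3 = 0" "p1*k3 + q1*q3 - q2^2 = 0" "p1*q3 + q1*p3 - 2*p2*q2 = 0" "p1*p3 - p2^2 = 0"
    using cubic_zero[OF q cub2] by auto
  have c1: "q0*q2 - q1^2 = 0" "p0*q2 + q0*p2 - 2*p1*q1 = 0" "k0*q2 + p0*p2 - p1^2 = 0" "k0*p2 = 0"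
    using cubic_zero[OF q cub1] by auto
  have q1z: "q1 = 0" using c2(1) k3nz by simp
  have p2z: "p2 = 0" using c1(4) k0nz by simp
  have e1: "p1*k3 = q2^2" using c2(2) q1z by simp
  have e2: "k0*q2 = p1^2" using c1(3) p2z by simp
  have e3: "p1*q3 = 0" using c2(3) q1z p2z by simp
  have e4: "p1*p3 = 0" using c2(4) p2z by simp
  have e5: "p0*q2 = 0" using c1(2) q1z p2z by simp
  have e6: "q0*q2 = 0" using c1(1) q1z by simp
  have q2nz: "q2 \<noteq> 0"
  proof
    assume q2z: "q2 = 0"
    then have "p1 = 0" using e2 by simp
    then have h1: "h x $ 1 = 0" for x using hc(2) q1z by simp
    obtain z where z: "A *v z = Mv a b c d ev1" using Gq_surj[OF A] by blast
    have "h z = D^3 *s ev1" by (simp add: h_def z MMa)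
    then have "h z $ 1 = D^3" by (simp add: ev1_def)
    then show False using h1[of z] Dnz by simp
  qed
  have p1nz: "p1 \<noteq> 0" using e2 q2nz k0nz by (metis mult_eq_0_iff power_zero_numeral zero_neq_numeral)
  have p3z: "p3 = 0" using e4 p1nz by simp
  have q3z: "q3 = 0" using e3 p1nz by simp
  have p0z: "p0 = 0" using e5 q2nz by simp
  have q0z: "q0 = 0" using e6 q2nz by simp
  define r where "r = p1 / k0"
  have rnz: "r \<noteq> 0" using p1nz k0nz by (simp add: r_def)
  have p1r: "p1 = k0 * r" using k0nz by (simp add: r_def)
  have q2r: "q2 = k0 * r^2"
  proof -
    have "k0 * q2 = k0 * (k0 * r^2)" using e2 p1r by (simp add: power2_eq_square algebra_simps)
    then show ?thesis using k0nz by simp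
  qed
  have k3r: "k3 = k0 * r^3"
  proof -
    have "p1 * k3 = p1 * (k0 * r^3)" using e1 q2r p1r by (simp add: power2_eq_square power3_eq_cube algebra_simps)
    then show ?thesis using p1nz by simp
  qed
  have hx: "h x = k0 *s vec4 (x$0) (r*x$1) (r^2*x$2) (r^3*x$3)" for x
    by (simp add: vec4_eq_iff hc p0z q0z q1z p2z p3z q3z p1r q2r k3r algebra_simps)
  have Ax: "A *v x = (k0 / D^3) *s Mv a (b*r) c (d*r) x" for x
  proof -
    have "D^3 *s (A *v x) = Mv a b c d (h x)" by (simp add: h_def MMr D_def)
    also have "\<dots> = k0 *s Mv a b c d (vec4 (x$0) (r*x$1) (r^2*x$2) (r^3*x$3))" by (simp add: hx Mv_smult)
    also have "\<dots> = k0 *s Mv a (b*r) c (d*r) x" by (simp add: MD flip: vec4_expand)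
    finally have "D^3 *s (A *v x) = k0 *s Mv a (b*r) c (d*r) x" .
    then have "(1/D^3) *s (D^3 *s (A *v x)) = (1/D^3) *s (k0 *s Mv a (b*r) c (d*r) x)" by simp
    then show ?thesis using Dnz by (simp add: field_simps)
  qed
  have "a*(d*r) - (b*r)*c \<noteq> 0" using D rnz by (simp add: algebra_simps flip: right_diff_distrib')
  moreover have "k0 / D^3 \<noteq> 0" using k0nz Dnz by simp
  ultimately show ?thesis using Ax by blast
qed

lemma three_nz:
  assumes "CARD('a::{finite,field}) mod 3 \<noteq> 0"
  shows "(3::'a) \<noteq> 0"
proof
  assume h3: "(3::'a) = 0"
  have one_nz: "(1::'a) \<noteq> 0" by simp
  have two_nz: "(2::'a) \<noteq> 0"
  proof
    assume h2: "(2::'a) = 0"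
    have "(1::'a) = 3 - 2" by simp
    also have "\<dots> = 0" by (simp only: h2 h3 diff_self)
    finally show False by simp
  qed
  have one_two: "(1::'a) \<noteq> 2"
  proof
    assume h: "(1::'a) = 2"
    have "(1::'a) = 2 - 1" by simp
    also have "\<dots> = 0" by (simp only: h[symmetric] diff_self)
    finally show False by simp
  qed
  define Orb :: "'a \<Rightarrow> 'a set" where "Orb x = {x, x+1, x+2}" for x
  have x3: "x + 3 = x" for x :: 'a using h3 by simp
  have x4: "x + 2 + 2 = x + 1" for x :: 'a
  proof -
    have "x + 2 + 2 = x + 1 + 3" by (simp add: algebra_simps)
    then show ?thesis using x3 by simp
  qed
  have O1: "Orb (x + 1) = Orb x" for x
  proof -
    have "x + 1 + 2 = x" using x3[of x] by (simp add: algebra_simps)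
    moreover have "x + 1 + 1 = x + 2" by (simp add: algebra_simps)
    ultimately show ?thesis unfolding Orb_def by auto
  qed
  have O2: "Orb (x + 2) = Orb x" for x
  proof -
    have "x + 2 + 1 = x + 3" by (simp add: add.assoc)
    also have "\<dots> = x" by (rule x3)
    finally have "x + 2 + 1 = x" .
    then show ?thesis unfolding Orb_def x4 by auto
  qed
  have Omem: "Orb z = Orb x" if "z \<in> Orb x" for z x
  proof -
    have "z = x \<or> z = x + 1 \<or> z = x + 2" using that by (simp add: Orb_def)
    then show ?thesis by (elim disjE) (simp_all only: O1 O2)
  qed
  have cardO: "card (Orb x) = 3" for x
  proof -
    have "x \<noteq> x + 1" using one_nz by simp
    moreover have "x \<noteq> x + 2" using two_nz by simp
    moreover have "x + 1 \<noteq> x + 2" using one_two by simp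
    ultimately show ?thesis unfolding Orb_def by simp
  qed
  have "3 * card (range Orb) = card (\<Union>(range Orb))"
  proof (rule card_partition)
    show "finite (range Orb)" by simp
    show "finite (\<Union>(range Orb))" by simp
    show "card c = 3" if "c \<in> range Orb" for c using cardO that by auto
    show "c1 \<inter> c2 = {}" if "c1 \<in> range Orb" "c2 \<in> range Orb" "c1 \<noteq> c2" for c1 c2
    proof -
      note that
      then obtain x y where xy: "c1 = Orb x" "c2 = Orb y" by blast
      show "c1 \<inter> c2 = {}"
      proof (rule ccontr)
        assume "c1 \<inter> c2 \<noteq> {}"
        then obtain z where "z \<in> Orb x" "z \<in> Orb y" using xy by blast
        then have "Orb x = Orb y" using Omem by metis
        then show False using xy \<open>c1 \<noteq> c2\<close> by simp
      qed
    qed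
  qed
  moreover have "\<Union>(range Orb) = UNIV" unfolding Orb_def by auto
  ultimately have "3 * card (range Orb) = CARD('a)" by simp
  then show False using assms by (metis mod_mult_self1_is_0)
qed

lemma roots2:
  fixes b :: "'a::field"
  assumes three: "(3::'a) \<noteq> 0"
  shows "card {t. t^3 - 3*b*t^2 - 1 = 0} = 2 \<longleftrightarrow> ((2::'a) \<noteq> 0 \<and> 4*b^3 = -1)"
proof
  assume h: "(2::'a) \<noteq> 0 \<and> 4*b^3 = -1"
  then have bnz: "b \<noteq> 0" by auto
  have fac: "t^3 - 3*b*t^2 - 1 = (t - 2*b)^2 * (t + b)" for t
  proof -
    have "(t - 2*b)^2 * (t + b) = t^3 - 3*b*t^2 + 4*b^3" by algebra
    then show ?thesis using h by simp
  qed
  have "{t. t^3 - 3*b*t^2 - 1 = 0} = {2*b, -b}"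
  proof -
    have "t^3 - 3*b*t^2 - 1 = 0 \<longleftrightarrow> t = 2*b \<or> t = -b" for t
      unfolding fac by (auto simp: eq_neg_iff_add_eq_0)
    then show ?thesis by auto
  qed
  moreover have "2*b \<noteq> -b"
  proof
    assume h2b: "2*b = -b"
    have "3*b = 2*b + b" by algebra
    also have "\<dots> = 0" using h2b by simp
    finally have "3*b = 0" .
    then show False using three bnz by simp
  qed
  ultimately show "card {t. t^3 - 3*b*t^2 - 1 = 0} = 2" by simp
next
  assume "card {t. t^3 - 3*b*t^2 - 1 = 0} = 2"
  then obtain r1 r2 where R: "{t. t^3 - 3*b*t^2 - 1 = 0} = {r1, r2}" "r1 \<noteq> r2"
    unfolding card_2_iff by blast
  have p1: "r1^3 - 3*b*r1^2 - 1 = 0" and p2: "r2^3 - 3*b*r2^2 - 1 = 0" using R(1) by blast+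
  define X where "X = r1^2 + r1*r2 + r2^2 - 3*b*(r1+r2)"
  have "(r1 - r2) * X = (r1^3 - 3*b*r1^2 - 1) - (r2^3 - 3*b*r2^2 - 1)" unfolding X_def by algebra
  then have X0: "X = 0" using p1 p2 R(2) by simp
  define r3 where "r3 = 3*b - r1 - r2"
  have idt: "t^3 - 3*b*t^2 - 1 = (t - r1)*(t - r2)*(t - r3) + X*t + (r1*r2*r3 - 1)" for t
    unfolding X_def r3_def by algebra
  have K: "r1*r2*r3 = 1" using idt[of r1] p1 X0 by simp
  have "r3^3 - 3*b*r3^2 - 1 = 0" using idt[of r3] X0 K by simp
  then have "r3 \<in> {r1, r2}" using R(1) by blast
  then have "r3 = r1 \<or> r3 = r2" by simp
  then obtain u w where uw: "r3 = u" "X = 0" "u*w*u = 1" "3*b = 2*u + w"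
      "X = -(u*(u + 2*w))"
  proof
    assume "r3 = r1"
    have "3*b = (3*b - r1 - r2) + r1 + r2" by simp
    also have "\<dots> = r1 + r1 + r2" using \<open>r3 = r1\<close> unfolding r3_def by simp
    also have "\<dots> = 2*r1 + r2" by (simp add: mult_2 algebra_simps)
    finally have hb: "3*b = 2*r1 + r2" .
    have "X = r1^2 + r1*r2 + r2^2 - (3*b)*(r1+r2)" by (simp add: X_def mult.assoc)
    also have "\<dots> = r1^2 + r1*r2 + r2^2 - (2*r1 + r2)*(r1+r2)" using hb by simp
    also have "\<dots> = -(r1*(r1 + 2*r2))" by algebra
    finally have "X = -(r1*(r1 + 2*r2))" .
    note hX = this
    show thesis using that[of r1 r2] \<open>r3 = r1\<close> X0 K hb hX by (simp add: algebra_simps)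
  next
    assume "r3 = r2"
    have "3*b = (3*b - r1 - r2) + r1 + r2" by simp
    also have "\<dots> = r2 + r1 + r2" using \<open>r3 = r2\<close> unfolding r3_def by simp
    also have "\<dots> = 2*r2 + r1" by (simp add: mult_2 algebra_simps)
    finally have hb: "3*b = 2*r2 + r1" .
    have "X = r1^2 + r1*r2 + r2^2 - (3*b)*(r1+r2)" by (simp add: X_def mult.assoc)
    also have "\<dots> = r1^2 + r1*r2 + r2^2 - (2*r2 + r1)*(r1+r2)" using hb by simp
    also have "\<dots> = -(r2*(r2 + 2*r1))" by algebra
    finally have "X = -(r2*(r2 + 2*r1))" .
    note hX = this
    show thesis using that[of r2 r1] \<open>r3 = r2\<close> X0 K hb hX by (simp add: algebra_simps)
  qed
  have unz: "u \<noteq> 0" using uw(3) by auto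
  have "u + 2*w = 0" using uw(2,5) unz by simp
  have "u = (u + 2*w) - 2*w" by algebra
  then have u2: "u = -2*w" using \<open>u + 2*w = 0\<close> by simp
  have two: "(2::'a) \<noteq> 0"
  proof
    assume "(2::'a) = 0"
    then show False using u2 unz by simp
  qed
  have "3*b = 2*(-2*w) + w" using uw(4) u2 by simp
  also have "\<dots> = -3*w" by algebra
  finally have "3*b = -3*w" .
  note h3b = this
  have "3*(b + w) = 3*b + 3*w" by algebra
  also have "\<dots> = -3*w + 3*w" using h3b by simp
  also have "\<dots> = 0" by simp
  finally have "3*(b + w) = 0" .
  then have "(3::'a) = 0 \<or> b + w = 0" by (simp only: mult_eq_0_iff)
  then have bw: "b + w = 0" using three by blast
  have "w = (b + w) - b" by simp
  then have wb: "w = -b" using bw by simp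
  have "u*w*u = (-2*(-b))*(-b)*(-2*(-b))" using u2 wb by simp
  also have "\<dots> = -(4*b^3)" by algebra
  finally have "u*w*u = -(4*b^3)" .
  then have m: "-(4*b^3) = 1" using uw(3) by simp
  have "4*b^3 = - (-(4*b^3))" by simp
  also have "\<dots> = -1" by (simp only: m)
  finally have "4*b^3 = -1" .
  then show "(2::'a) \<noteq> 0 \<and> 4*b^3 = -1" using two by simp
qed

lemma C_Q: "pp x \<in> twisted_cubic \<Longrightarrow> Q1 x = 0 \<and> Q2 x = 0 \<and> Q3 x = 0"
proof -
  assume "pp x \<in> twisted_cubic"
  then obtain l a c where "x = l *s wac a c" using C_rep pp_self by blast
  then show ?thesis by (simp add: Q_smult Q_wac)
qed

lemma Tcond_wrep: "(\<exists>P\<in>twisted_cubic. \<forall>w\<in>P. Bz w x) \<longleftrightarrow> (\<exists>s. Bz (wrep s) x)"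
proof -
  have "\<And>s. (\<forall>w\<in>ptof s. Bz w x) \<longleftrightarrow> Bz (wrep s) x"
    unfolding ptof_def by (simp add: all_pp_Bz)
  then show ?thesis unfolding C_eq by auto
qed

lemma ell_L_eq: "(ell_L :: ('a::field^4) set set) = insert (pp (vec4 0 0 1 0)) (range (\<lambda>\<beta>. pp (vec4 1 0 \<beta> 1)))"
proof
  show "(ell_L :: ('a^4) set set) \<subseteq> insert (pp (vec4 0 0 1 0)) (range (\<lambda>\<beta>. pp (vec4 1 0 \<beta> 1)))"
  proof
    fix P :: "('a^4) set" assume "P \<in> ell_L"
    then obtain a b :: 'a where ab: "a \<noteq> 0 \<or> b \<noteq> 0" "P = pp (a *s vec4 1 0 0 1 + b *s vec4 0 0 1 0)"
      by (auto simp: ell_L_def pline_def)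
    show "P \<in> insert (pp (vec4 0 0 1 0)) (range (\<lambda>\<beta>. pp (vec4 1 0 \<beta> 1)))"
    proof (cases "a = 0")
      case True
      then have eq: "a *s vec4 1 0 0 1 + b *s vec4 0 0 1 0 = b *s (vec4 0 0 1 0 :: 'a^4)"
        by (simp add: vec4_eq_iff)
      have bnz: "b \<noteq> 0" using ab(1) True by simp
      have "P = pp (b *s (vec4 0 0 1 0 :: 'a^4))" using ab(2) by (simp only: eq)
      then have "P = pp (vec4 0 0 1 0)" by (simp only: pp_scale[OF bnz])
      then show ?thesis by simp
    next
      case False
      then have eq: "a *s vec4 1 0 0 1 + b *s vec4 0 0 1 0 = a *s (vec4 1 0 (b/a) 1 :: 'a^4)"
        by (simp add: vec4_eq_iff)
      have "P = pp (a *s (vec4 1 0 (b/a) 1 :: 'a^4))" using ab(2) by (simp only: eq)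
      then have "P = pp (vec4 1 0 (b/a) 1)" by (simp only: pp_scale[OF False])
      then show ?thesis by blast
    qed
  qed
  show "insert (pp (vec4 0 0 1 0)) (range (\<lambda>\<beta>. pp (vec4 1 0 \<beta> 1))) \<subseteq> (ell_L :: ('a^4) set set)"
  proof
    fix P :: "('a^4) set" assume "P \<in> insert (pp (vec4 0 0 1 0)) (range (\<lambda>\<beta>. pp (vec4 1 0 \<beta> 1)))"
    then obtain a b :: 'a where ab: "a \<noteq> 0 \<or> b \<noteq> 0" "P = pp (a *s vec4 1 0 0 1 + b *s vec4 0 0 1 0)"
    proof
      assume "P = pp (vec4 0 0 1 0)"
      moreover have "(0::'a) *s vec4 1 0 0 1 + 1 *s vec4 0 0 1 0 = (vec4 0 0 1 0 :: 'a^4)"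
        by (simp add: vec4_eq_iff)
      ultimately show thesis using that[of 0 1] by simp
    next
      assume "P \<in> range (\<lambda>\<beta>. pp (vec4 1 0 \<beta> 1))"
      then obtain \<beta> where P: "P = pp (vec4 1 0 \<beta> 1)" by blast
      have "(1::'a) *s vec4 1 0 0 1 + \<beta> *s vec4 0 0 1 0 = (vec4 1 0 \<beta> 1 :: 'a^4)"
        by (simp add: vec4_eq_iff)
      then show thesis using that[of 1 \<beta>] P by simp
    qed
    then show "P \<in> ell_L" unfolding ell_L_def pline_def by blast
  qed
qed

lemma f_inj: "inj (\<lambda>\<beta>::'a::field. pp (vec4 1 0 \<beta> 1))"
proof (rule injI)
  fix x y :: 'a
  assume "pp (vec4 1 0 x 1) = pp (vec4 1 0 y 1)"
  then obtain c where c: "vec4 1 0 x 1 = c *s (vec4 1 0 y 1 :: 'a^4)" using pp_eq_pp by blast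
  have "(vec4 1 0 x 1 :: 'a^4) $ 0 = (c *s (vec4 1 0 y 1 :: 'a^4)) $ 0" using c by (rule arg_cong)
  then have c1: "c = 1" by simp
  have "(vec4 1 0 x 1 :: 'a^4) $ 2 = (c *s (vec4 1 0 y 1 :: 'a^4)) $ 2" using c by (rule arg_cong)
  then show "x = y" using c1 by simp
qed

lemma e2_notin: "pp (vec4 0 0 1 0) \<notin> range (\<lambda>\<beta>::'a::field. pp (vec4 1 0 \<beta> 1))"
proof
  assume "pp (vec4 0 0 1 0) \<in> range (\<lambda>\<beta>::'a. pp (vec4 1 0 \<beta> 1))"
  then obtain \<beta> :: 'a where "pp (vec4 0 0 1 0) = pp (vec4 1 0 \<beta> 1)" by blast
  then obtain c where c: "vec4 0 0 1 0 = c *s (vec4 1 0 \<beta> 1 :: 'a^4)" using pp_eq_pp by blast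
  have "(vec4 0 0 1 0 :: 'a^4) $ 0 = (c *s (vec4 1 0 \<beta> 1 :: 'a^4)) $ 0" using c by (rule arg_cong)
  then have c0: "c = 0" by simp
  have "(vec4 0 0 1 0 :: 'a^4) $ 2 = (c *s (vec4 1 0 \<beta> 1 :: 'a^4)) $ 2" using c by (rule arg_cong)
  then show False using c0 by simp
qed

lemma Bz_vt_f: "Bz (vt t) (vec4 1 0 \<beta> 1) \<longleftrightarrow>
   t * (t^2 * \<beta> + 1) = 0 \<and> t * (t - 2*\<beta>) = 0 \<and> t^3 + 1 - t^2*\<beta> = (0::'a::field)"
proof -
  have "B1 (vt t) (vec4 1 0 \<beta> 1) = t * (t^2 * \<beta> + 1)"
    by (simp add: B1_def vt_def algebra_simps power2_eq_square power3_eq_cube)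
  moreover have "B2 (vt t) (vec4 1 0 \<beta> 1) = t * (t - 2*\<beta>)"
    by (simp add: B2_def vt_def algebra_simps power2_eq_square)
  moreover have "B3 (vt t) (vec4 1 0 \<beta> 1) = t^3 + 1 - t^2*\<beta>"
    by (simp add: B3_def vt_def algebra_simps)
  ultimately show ?thesis by (simp add: Bz_def)
qed

lemma T_f: "T_point (pp (vec4 1 0 (\<beta>::'a::field) 1)) \<longleftrightarrow> ((2::'a) \<noteq> 0 \<and> 4*\<beta>^3 = -1)"
proof -
  let ?x = "vec4 1 0 \<beta> 1 :: 'a^4"
  have nz: "?x \<noteq> 0" by (simp add: vec4_eq_iff)
  have nC: "pp ?x \<notin> twisted_cubic"
  proof
    assume "pp ?x \<in> twisted_cubic"
    then have "Q3 ?x = 0" using C_Q by blast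
    then show False by (simp add: Q3_def)
  qed
  have None: "\<not> Bz (wrep None) ?x" by (simp add: Bz_def B3_def wrep_def e0_def)
  have "(\<exists>s. Bz (wrep s) ?x) \<longleftrightarrow> (\<exists>t. Bz (vt t) ?x)"
  proof
    assume "\<exists>s. Bz (wrep s) ?x"
    then obtain s where s: "Bz (wrep s) ?x" by blast
    then show "\<exists>t. Bz (vt t) ?x" using None by (cases s) (auto simp: wrep_def)
  next
    assume "\<exists>t. Bz (vt t) ?x"
    then obtain t where "Bz (vt t) ?x" by blast
    then have "Bz (wrep (Some t)) ?x" by (simp add: wrep_def)
    then show "\<exists>s. Bz (wrep s) ?x" by blast
  qed
  also have "\<dots> \<longleftrightarrow> ((2::'a) \<noteq> 0 \<and> 4*\<beta>^3 = -1)"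
  proof
    assume "\<exists>t. Bz (vt t) ?x"
    then obtain t where h1: "t * (t^2 * \<beta> + 1) = 0" and h2: "t * (t - 2*\<beta>) = 0"
      and h3: "t^3 + 1 - t^2*\<beta> = 0" unfolding Bz_vt_f by blast
    have tnz: "t \<noteq> 0" using h3 by auto
    then have t2: "t = 2*\<beta>" using h2 by simp
    have "t^2*\<beta> + 1 = 0" using h1 tnz by simp
    then have "(2*\<beta>)^2*\<beta> + 1 = 0" using t2 by simp
    moreover have "(2*\<beta>)^2*\<beta> + 1 = 4*\<beta>^3 + 1" by algebra
    ultimately have "4*\<beta>^3 + 1 = 0" by simp
    then have "4*\<beta>^3 = -1" by (simp add: eq_neg_iff_add_eq_0)
    moreover have "(2::'a) \<noteq> 0" using tnz t2 by auto
    ultimately show "(2::'a) \<noteq> 0 \<and> 4*\<beta>^3 = -1" by simp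
  next
    assume h: "(2::'a) \<noteq> 0 \<and> 4*\<beta>^3 = -1"
    have e: "4*\<beta>^3 + 1 = 0" using h by simp
    have "(2*\<beta>) * ((2*\<beta>)^2 * \<beta> + 1) = 2*\<beta>*(4*\<beta>^3 + 1)" by algebra
    then have a1: "(2*\<beta>) * ((2*\<beta>)^2 * \<beta> + 1) = 0" using e by simp
    have a2: "(2*\<beta>) * ((2*\<beta>) - 2*\<beta>) = 0" by simp
    have "(2*\<beta>)^3 + 1 - (2*\<beta>)^2*\<beta> = 4*\<beta>^3 + 1" by algebra
    then have a3: "(2*\<beta>)^3 + 1 - (2*\<beta>)^2*\<beta> = 0" using e by simp
    show "\<exists>t. Bz (vt t) ?x" unfolding Bz_vt_f using a1 a2 a3 by blast
  qed
  finally have "(\<exists>s. Bz (wrep s) ?x) \<longleftrightarrow> ((2::'a) \<noteq> 0 \<and> 4*\<beta>^3 = -1)" .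
  then show ?thesis unfolding T_char Tcond_wrep using nz nC by simp
qed

lemma T_e2: "T_point (pp (vec4 0 0 1 0 :: 'a::field^4))"
proof -
  let ?x = "vec4 0 0 1 0 :: 'a^4"
  have nz: "?x \<noteq> 0" by (simp add: vec4_eq_iff)
  have nC: "pp ?x \<notin> twisted_cubic"
  proof
    assume "pp ?x \<in> twisted_cubic"
    then have "Q2 ?x = 0" using C_Q by blast
    then show False by (simp add: Q2_def)
  qed
  have "Bz (wrep (Some 0)) ?x" by (simp add: Bz_def B1_def B2_def B3_def wrep_def vt_def)
  then show ?thesis unfolding T_char Tcond_wrep using nz nC by blast
qed

lemma G_f: "one_Gamma_point (pp (vec4 1 0 \<beta> 1)) \<longleftrightarrow> card {t. t^3 - 3*\<beta>*t^2 - 1 = (0::'a::field)} = 1"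
proof -
  let ?x = "vec4 1 0 \<beta> 1 :: 'a^4"
  have nz: "?x \<noteq> 0" by (simp add: vec4_eq_iff)
  have nC: "pp ?x \<notin> twisted_cubic"
  proof
    assume "pp ?x \<in> twisted_cubic"
    then have "Q3 ?x = 0" using C_Q by blast
    then show False by (simp add: Q3_def)
  qed
  have gS: "gv (Some t) ?x = -(t^3 - 3*\<beta>*t^2 - 1)" for t
    by (simp add: gv_def algebra_simps)
  have "{s. gv s ?x = 0} = Some ` {t. t^3 - 3*\<beta>*t^2 - 1 = 0}"
  proof (intro set_eqI iffI)
    fix s assume hs: "s \<in> {s. gv s ?x = 0}"
    show "s \<in> Some ` {t. t^3 - 3*\<beta>*t^2 - 1 = 0}"
    proof (cases s)
      case None
      then show ?thesis using hs by (simp add: gv_def)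
    next
      case (Some t)
      then have "gv (Some t) ?x = 0" using hs by simp
      then have "t^3 - 3*\<beta>*t^2 - 1 = 0" by (simp only: gS neg_equal_0_iff_equal)
      then show ?thesis using Some by blast
    qed
  next
    fix s assume "s \<in> Some ` {t. t^3 - 3*\<beta>*t^2 - 1 = 0}"
    then obtain t where t: "s = Some t" "t^3 - 3*\<beta>*t^2 - 1 = 0" by blast
    have "gv (Some t) ?x = 0" by (simp only: gS t(2) neg_0_equal_iff_equal) simp
    then show "s \<in> {s. gv s ?x = 0}" using t(1) by simp
  qed
  then have "card {s. gv s ?x = 0} = card {t. t^3 - 3*\<beta>*t^2 - 1 = 0}"
    by (simp add: card_image)
  then show ?thesis unfolding G_char using nz nC by simp
qed

lemma G_e2:
  assumes three: "(3::'a::field) \<noteq> 0"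
  shows "\<not> one_Gamma_point (pp (vec4 0 0 1 0 :: 'a^4))"
proof -
  let ?x = "vec4 0 0 1 0 :: 'a^4"
  have "{s. gv s ?x = 0} = {None, Some 0}"
  proof (intro set_eqI iffI)
    fix s assume "s \<in> {s. gv s ?x = 0}"
    then show "s \<in> {None, Some 0}" using three by (cases s) (auto simp: gv_def)
  next
    fix s assume "s \<in> {None, Some (0::'a)}"
    then show "s \<in> {s. gv s ?x = 0}" by (auto simp: gv_def)
  qed
  then have "card {s. gv s ?x = 0} = 2" by simp
  then show ?thesis unfolding G_char by simp
qed

lemma ell_counts:
  assumes three: "(3::'a::{finite,field}) \<noteq> 0"
  shows "card {P \<in> (ell_L :: ('a^4) set set). T_point P} = Vm TYPE('a) 2 + 1"
    and "card {P \<in> (ell_L :: ('a^4) set set). one_Gamma_point P} = Vm TYPE('a) 1"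
proof -
  define f :: "'a \<Rightarrow> ('a^4) set" where "f \<beta> = pp (vec4 1 0 \<beta> 1)" for \<beta>
  define e :: "('a^4) set" where "e = pp (vec4 0 0 1 0)"
  have finj: "inj f" unfolding f_def by (rule f_inj)
  have enot: "e \<notin> range f" unfolding e_def f_def by (rule e2_notin)
  have ell: "(ell_L :: ('a^4) set set) = insert e (range f)" unfolding e_def f_def by (rule ell_L_eq)
  define S where "S = {\<beta>::'a. (2::'a) \<noteq> 0 \<and> 4*\<beta>^3 = -1}"
  define S1 where "S1 = {\<beta>::'a. card {t. t^3 - 3*\<beta>*t^2 - 1 = 0} = 1}"
  have "{P \<in> (ell_L :: ('a^4) set set). T_point P} = insert e (f ` S)"
  proof -
    have "T_point e" unfolding e_def by (rule T_e2)
    moreover have "T_point (f \<beta>) \<longleftrightarrow> \<beta> \<in> S" for \<beta> unfolding f_def S_def by (simp add: T_f)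
    ultimately show ?thesis unfolding ell by auto
  qed
  moreover have "e \<notin> f ` S" using enot by blast
  moreover have "card (f ` S) = card S" by (rule card_image[OF inj_on_subset[OF finj subset_UNIV]])
  moreover have "card S = Vm TYPE('a) 2"
  proof -
    have "S = {\<beta>::'a. card {t::'a. t^3 - 3*\<beta>*t^2 - 1 = 0} = 2}"
      unfolding S_def using roots2[OF three] by simp
    then show ?thesis by (simp add: Vm_def)
  qed
  ultimately show "card {P \<in> (ell_L :: ('a^4) set set). T_point P} = Vm TYPE('a) 2 + 1" by simp
  have "{P \<in> (ell_L :: ('a^4) set set). one_Gamma_point P} = f ` S1"
  proof -
    have "\<not> one_Gamma_point e" unfolding e_def by (rule G_e2[OF three])
    moreover have "one_Gamma_point (f \<beta>) \<longleftrightarrow> \<beta> \<in> S1" for \<beta> unfolding f_def S1_def by (simp add: G_f)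
    ultimately show ?thesis unfolding ell by auto
  qed
  moreover have "card (f ` S1) = card S1" by (rule card_image[OF inj_on_subset[OF finj subset_UNIV]])
  moreover have "card S1 = Vm TYPE('a) 1" by (simp add: Vm_def S1_def)
  ultimately show "card {P \<in> (ell_L :: ('a^4) set set). one_Gamma_point P} = Vm TYPE('a) 1" by simp
qed

theorem lemma4p3:
  assumes "CARD('a::{finite,field}) \<ge> 5" and "CARD('a) mod 3 \<noteq> 0"
  shows "\<forall>L \<in> (orbit_L :: ('a^4) set set set).
           card {P \<in> L. T_point P} = Vm TYPE('a) 2 + 1 \<and>
           card {P \<in> L. one_Gamma_point P} = Vm TYPE('a) 1"
proof
  fix L assume "L \<in> (orbit_L :: ('a^4) set set set)"
  then obtain A :: "'a^4^4" where A: "A \<in> Gq" "L = pmap A ` ell_L" by (auto simp: orbit_L_def)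
  obtain a b c d \<mu> where cl: "a*d-b*c \<noteq> 0" "\<mu> \<noteq> 0" "\<forall>x. A *v x = \<mu> *s Mv a b c d x"
    using classify[OF A(1) assms(1)] by blast
  have hB: "Bz (A *v x) (A *v y) \<longleftrightarrow> Bz x y" for x y using cl Bz_Mv by simp
  have hO: "om (A *v x) (A *v y) = 0 \<longleftrightarrow> om x y = 0" for x y using cl om_Mv by simp
  have three: "(3::'a) \<noteq> 0" by (rule three_nz[OF assms(2)])
  show "card {P \<in> L. T_point P} = Vm TYPE('a) 2 + 1 \<and> card {P \<in> L. one_Gamma_point P} = Vm TYPE('a) 1"
    unfolding A(2) orbit_counts[OF A(1) hB hO] ell_counts[OF three] by simp
qed

end
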